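(* Let $\rho^s$ be a qubit state on $H_2=\mathbb{C}^2$ and let $\rho=\rho^s\otimes|0\rangle\langle 0|$ be the two-qubit state on $H_2\otimes H_2$ obtained by adjoining an auxiliary qubit in state $|0\rangle$. Then there exists an incoherent operation $\Lambda$ on $H_2\otimes H_2$ such that $\Lambda(\rho)$ is Bell-nonlocal if and only if $\rho^s$ has non-vanishing coherence, i.e. $\rho^s_{01}=\langle 0|\rho^s|1\rangle\neq 0$.
   Context: Coherence is taken with respect to the fixed computational basis $\{|0\rangle,|1\rangle\}$ (and the product computational basis $\{|i\rangle|j\rangle\}$ on $H_2\otimes H_2$). A state is incoherent if it is diagonal in this basis; $\rho^s$ has non-vanishing coherence if it is not incoherent (equivalently its $l_1$-norm coherence $\mathcal{C}_{l_1}(\rho^s)=\sum_{i\neq j}|\rho^s_{ij}|$ is nonzero). An incoherent operation is a completely positive trace-preserving map $\Lambda(\rho)=\sum_j K_j\rho K_j^\dagger$ whose Kraus operators satisfy $K_j\mathcal{I}K_j^\dagger\subseteq\mathcal{I}$, where $\mathcal{I}$ is the set of incoherent states. A bipartite state is Bell-nonlocal if it violates some Bell inequality, i.e. its measurement statistics do not admit a local hidden variable model. *)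

theory Defs
  imports Complex_Main
begin

text \<open>Finite-dimensional complex matrices are represented as functions
  nat => nat => complex; only the entries with indices below the dimension d
  are ever used.  The computational basis of C^d is the standard basis, and
  on C^2 (x) C^2 the product basis vector |i>|j> has index 2*i+j.\<close>

type_synonym cmat = "nat \<Rightarrow> nat \<Rightarrow> complex"

definition mmult :: "nat \<Rightarrow> cmat \<Rightarrow> cmat \<Rightarrow> cmat" where
  "mmult d A B = (\<lambda>i j. \<Sum>k<d. A i k * B k j)"

definition adjoint :: "cmat \<Rightarrow> cmat" where
  "adjoint A = (\<lambda>i j. cnj (A j i))"

definition idm :: cmat where
  "idm = (\<lambda>i j. if i = j then 1 else 0)"

definition mtrace :: "nat \<Rightarrow> cmat \<Rightarrow> complex" where
  "mtrace d A = (\<Sum>i<d. A i i)"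

definition psd :: "nat \<Rightarrow> cmat \<Rightarrow> bool" where
  "psd d A \<longleftrightarrow> (\<forall>v :: nat \<Rightarrow> complex.
      let q = (\<Sum>i<d. \<Sum>j<d. cnj (v i) * A i j * v j) in Im q = 0 \<and> Re q \<ge> 0)"

definition density :: "nat \<Rightarrow> cmat \<Rightarrow> bool" where
  "density d \<rho> \<longleftrightarrow> psd d \<rho> \<and> mtrace d \<rho> = 1"

definition diagonal :: "nat \<Rightarrow> cmat \<Rightarrow> bool" where
  "diagonal d A \<longleftrightarrow> (\<forall>i<d. \<forall>j<d. i \<noteq> j \<longrightarrow> A i j = 0)"

definition incoherent :: "nat \<Rightarrow> cmat \<Rightarrow> bool" where
  "incoherent d \<rho> \<longleftrightarrow> density d \<rho> \<and> diagonal d \<rho>"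

definition kron :: "nat \<Rightarrow> cmat \<Rightarrow> cmat \<Rightarrow> cmat" where
  "kron dB A B = (\<lambda>r c. A (r div dB) (c div dB) * B (r mod dB) (c mod dB))"

definition proj0 :: cmat where
  "proj0 = (\<lambda>i j. if i = 0 \<and> j = 0 then 1 else 0)"

definition kraus_apply :: "nat \<Rightarrow> cmat list \<Rightarrow> cmat \<Rightarrow> cmat" where
  "kraus_apply d Ks \<rho> = (\<lambda>i j. \<Sum>K\<leftarrow>Ks. mmult d (mmult d K \<rho>) (adjoint K) i j)"

definition trace_preserving :: "nat \<Rightarrow> cmat list \<Rightarrow> bool" where
  "trace_preserving d Ks \<longleftrightarrow>
     (\<forall>i<d. \<forall>j<d. (\<Sum>K\<leftarrow>Ks. mmult d (adjoint K) K i j) = idm i j)"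

text \<open>Incoherent operation: CPTP map in Kraus form (complete positivity is
  automatic) with every Kraus operator mapping incoherent states to
  (unnormalised) incoherent, i.e. diagonal, operators.\<close>
definition incoherent_op :: "nat \<Rightarrow> cmat list \<Rightarrow> bool" where
  "incoherent_op d Ks \<longleftrightarrow> trace_preserving d Ks \<and>
     (\<forall>K \<in> set Ks. \<forall>\<rho>. incoherent d \<rho> \<longrightarrow> diagonal d (mmult d (mmult d K \<rho>) (adjoint K)))"

definition povms :: "nat \<Rightarrow> nat \<Rightarrow> nat \<Rightarrow> (nat \<Rightarrow> nat \<Rightarrow> cmat) \<Rightarrow> bool" where
  "povms d m nout M \<longleftrightarrow> (\<forall>x<m. (\<forall>a<nout. psd d (M x a)) \<and>
      (\<forall>i<d. \<forall>j<d. (\<Sum>a<nout. M x a i j) = idm i j))"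

definition bell_prob :: "cmat \<Rightarrow> (nat \<Rightarrow> nat \<Rightarrow> cmat) \<Rightarrow> (nat \<Rightarrow> nat \<Rightarrow> cmat)
     \<Rightarrow> nat \<Rightarrow> nat \<Rightarrow> nat \<Rightarrow> nat \<Rightarrow> complex" where
  "bell_prob \<rho> M N a b x y = mtrace 4 (mmult 4 \<rho> (kron 2 (M x a) (N y b)))"

definition lhv_model :: "nat \<Rightarrow> nat \<Rightarrow> nat \<Rightarrow> nat
     \<Rightarrow> (nat \<Rightarrow> nat \<Rightarrow> nat \<Rightarrow> nat \<Rightarrow> complex) \<Rightarrow> bool" where
  "lhv_model mA mB oA oB P \<longleftrightarrow>
     (\<exists>(n::nat) (q :: nat \<Rightarrow> real) (pA :: nat \<Rightarrow> nat \<Rightarrow> nat \<Rightarrow> real) (pB :: nat \<Rightarrow> nat \<Rightarrow> nat \<Rightarrow> real).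
        (\<forall>l<n. q l \<ge> 0) \<and> (\<Sum>l<n. q l) = 1 \<and>
        (\<forall>l<n. \<forall>x<mA. (\<forall>a<oA. pA l x a \<ge> 0) \<and> (\<Sum>a<oA. pA l x a) = 1) \<and>
        (\<forall>l<n. \<forall>y<mB. (\<forall>b<oB. pB l y b \<ge> 0) \<and> (\<Sum>b<oB. pB l y b) = 1) \<and>
        (\<forall>a<oA. \<forall>b<oB. \<forall>x<mA. \<forall>y<mB.
           P a b x y = complex_of_real (\<Sum>l<n. q l * pA l x a * pB l y b)))"

definition bell_nonlocal :: "cmat \<Rightarrow> bool" where
  "bell_nonlocal \<rho> \<longleftrightarrow> (\<exists>mA mB oA oB M N.
      povms 2 mA oA M \<and> povms 2 mB oB N \<and>
      \<not> lhv_model mA mB oA oB (bell_prob \<rho> M N))"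

end

theory Submission
  imports Defs
begin

lemma sum2: "(\<Sum>i<(2::nat). f i) = f 0 + f 1"
  by (simp add: numeral_2_eq_2)
lemma sum4: "(\<Sum>i<(4::nat). f i) = f 0 + f 1 + f 2 + f 3"
  by (simp add: lessThan_nat_numeral algebra_simps)

lemma psd2_facts:
  assumes "psd 2 A"
  shows "Im (A 0 0) = 0" "Re (A 0 0) \<ge> 0" "Im (A 1 1) = 0" "Re (A 1 1) \<ge> 0"
        "A 1 0 = cnj (A 0 1)"
proof -
  have q: "\<And>x y. Im (cnj x * A 0 0 * x + cnj x * A 0 1 * y + (cnj y * A 1 0 * x + cnj y * A 1 1 * y)) = 0 \<and>
        Re (cnj x * A 0 0 * x + cnj x * A 0 1 * y + (cnj y * A 1 0 * x + cnj y * A 1 1 * y)) \<ge> 0"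
  proof -
    fix x y
    show "?thesis x y" using assms unfolding psd_def
      apply (elim allE[where x="\<lambda>i. if i = 0 then x else y"])
      by (simp add: sum2 Let_def)
  qed
  from q[of 1 0] show "Im (A 0 0) = 0" "Re (A 0 0) \<ge> 0" by auto
  from q[of 0 1] show "Im (A 1 1) = 0" "Re (A 1 1) \<ge> 0" by auto
  from q[of 1 1] have a: "Im (A 0 0 + A 0 1 + A 1 0 + A 1 1) = 0" by (simp add: algebra_simps)
  from q[of 1 \<i>] have b: "Im (A 0 0 + \<i> * A 0 1 - \<i> * A 1 0 + A 1 1) = 0" by (simp add: algebra_simps)
  from q[of 1 0] q[of 0 1] a b show "A 1 0 = cnj (A 0 1)"
    by (auto simp: complex_eq_iff)
qed

lemma cm2: "cmod x * cmod x = Re x * Re x + Im x * Im x"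
  by (metis cmod_power2 power2_eq_square)

lemma psd2_q:
  assumes "psd 2 A"
  shows "Im (cnj x * A 0 0 * x + cnj x * A 0 1 * y + (cnj y * A 1 0 * x + cnj y * A 1 1 * y)) = 0 \<and>
        Re (cnj x * A 0 0 * x + cnj x * A 0 1 * y + (cnj y * A 1 0 * x + cnj y * A 1 1 * y)) \<ge> 0"
  using assms unfolding psd_def
  apply (elim allE[where x="\<lambda>i. if i = 0 then x else y"])
  by (simp add: sum2 Let_def)

lemma psd2_bound:
  assumes "psd 2 A"
  shows "cmod (A 0 1)^2 \<le> Re (A 0 0) * Re (A 1 1)"
proof -
  note f = psd2_facts[OF assms]
  define p where "p = Re (A 0 0)"
  define r where "r = Re (A 1 1)"
  define z where "z = A 0 1"
  have A00: "A 0 0 = of_real p" using f(1) unfolding p_def by (simp add: complex_eq_iff)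
  have A11: "A 1 1 = of_real r" using f(3) unfolding r_def by (simp add: complex_eq_iff)
  have A10: "A 1 0 = cnj z" using f(5) z_def by simp
  have zz: "z * cnj z = of_real (cmod z ^ 2)" by (metis complex_norm_square of_real_power)
  have zz': "cnj z * z = of_real (cmod z ^ 2)" by (metis complex_norm_square of_real_power mult.commute)
  have p0: "p \<ge> 0" and r0: "r \<ge> 0" using f p_def r_def by auto
  show ?thesis
  proof (cases "r > 0")
    case True
    have "cnj (of_real r) * A 0 0 * of_real r + cnj (of_real r) * A 0 1 * (- cnj z) +
       (cnj (- cnj z) * A 1 0 * of_real r + cnj (- cnj z) * A 1 1 * (- cnj z))
       = of_real (r * (p * r - cmod z ^ 2))"
      unfolding A00 A11 A10 z_def[symmetric]
      by (simp add: complex_eq_iff cm2 algebra_simps power2_eq_square)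
    with psd2_q[OF assms, of "of_real r" "- cnj z"] have "r * (p * r - cmod z ^ 2) \<ge> 0" by (metis Re_complex_of_real)
    with True have "p * r - cmod z ^ 2 \<ge> 0" by (simp add: zero_le_mult_iff)
    then show ?thesis using p_def r_def z_def by simp
  next
    case False
    then have r: "r = 0" using r0 by simp
    show ?thesis
    proof (cases "p > 0")
      case True
      have "cnj (- z) * A 0 0 * (- z) + cnj (- z) * A 0 1 * of_real p +
         (cnj (of_real p) * A 1 0 * (- z) + cnj (of_real p) * A 1 1 * of_real p)
         = of_real (p * (p * r - cmod z ^ 2))"
        unfolding A00 A11 A10 z_def[symmetric]
        by (simp add: complex_eq_iff cm2 algebra_simps power2_eq_square)
      with psd2_q[OF assms, of "- z" "of_real p"] have "p * (p * r - cmod z ^ 2) \<ge> 0" by (metis Re_complex_of_real)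
      with True have "p * r - cmod z ^ 2 \<ge> 0" by (simp add: zero_le_mult_iff)
      then show ?thesis using p_def r_def z_def by simp
    next
      case False
      then have p: "p = 0" using p0 by simp
      have "cnj (- z) * A 0 0 * (- z) + cnj (- z) * A 0 1 * 1 +
         (cnj 1 * A 1 0 * (- z) + cnj 1 * A 1 1 * 1)
         = of_real (- 2 * cmod z ^ 2)"
        unfolding A00 A11 A10 z_def[symmetric] r p
        by (simp add: complex_eq_iff cm2 algebra_simps power2_eq_square)
      with psd2_q[OF assms, of "- z" 1] have "- 2 * cmod z ^ 2 \<ge> 0" by (metis Re_complex_of_real)
      then have "cmod z ^ 2 \<le> 0" by simp
      then show ?thesis using p_def r_def z_def p r by simp
    qed
  qed
qed

lemma amgm: "(a::real) * b \<le> ((a + b) / 2)^2"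
proof -
  have "((a + b) / 2)^2 = a * b + ((a - b) / 2)^2" by (simp add: power2_eq_square field_simps)
  moreover have "0 \<le> ((a - b) / 2)^2" by simp
  ultimately show ?thesis by linarith
qed

lemma psd2_intro:
  assumes "A 0 0 = of_real p" "A 1 1 = of_real r" "A 1 0 = cnj (A 0 1)" "p \<ge> 0" "r \<ge> 0"
    "cmod (A 0 1)^2 \<le> p * r"
  shows "psd 2 A"
  unfolding psd_def Let_def
proof (intro allI conjI)
  fix v :: "nat \<Rightarrow> complex"
  define x where "x = v 0"
  define y where "y = v 1"
  define z where "z = A 0 1"
  define t where "t = cnj x * z * y"
  have e: "(\<Sum>i<2. \<Sum>j<2. cnj (v i) * A i j * v j) = of_real (p * cmod x ^ 2 + r * cmod y ^ 2) + (t + cnj t)"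
    unfolding sum2 assms(1,2,3) x_def[symmetric] y_def[symmetric] z_def[symmetric] t_def
    by (simp add: complex_eq_iff cm2 algebra_simps power2_eq_square)
  have "Im (t + cnj t) = 0" by simp
  then show "Im (\<Sum>i<2. \<Sum>j<2. cnj (v i) * A i j * v j) = 0" unfolding e by simp
  have tb: "cmod t = cmod x * cmod z * cmod y" unfolding t_def by (simp add: norm_mult)
  have "(cmod x * cmod z * cmod y)^2 \<le> (p * r) * (cmod x ^ 2 * cmod y ^ 2)"
  proof -
    have "cmod z ^ 2 * (cmod x ^ 2 * cmod y ^ 2) \<le> (p * r) * (cmod x ^ 2 * cmod y ^ 2)"
      using assms(6) z_def by (intro mult_right_mono) auto
    moreover have "(cmod x * cmod z * cmod y)^2 = cmod z ^ 2 * (cmod x ^ 2 * cmod y ^ 2)"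
      by (simp add: power2_eq_square)
    ultimately show ?thesis by (simp only:)
  qed
  also have "\<dots> \<le> ((p * cmod x ^ 2 + r * cmod y ^ 2) / 2)^2"
    using amgm[of "p * cmod x ^ 2" "r * cmod y ^ 2"] by (simp add: algebra_simps)
  finally have "cmod t ^ 2 \<le> ((p * cmod x ^ 2 + r * cmod y ^ 2) / 2) ^ 2"
    unfolding tb .
  moreover have "0 \<le> (p * cmod x ^ 2 + r * cmod y ^ 2) / 2"
    using assms(4,5) by simp
  ultimately have "cmod t \<le> (p * cmod x ^ 2 + r * cmod y ^ 2) / 2"
    by (rule power2_le_imp_le)
  moreover have "Re (t + cnj t) = 2 * Re t" by simp
  moreover have "- cmod t \<le> Re t" using abs_Re_le_cmod[of t] by linarith
  ultimately show "0 \<le> Re (\<Sum>i<2. \<Sum>j<2. cnj (v i) * A i j * v j)" unfolding e by simp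
qed


lemma psd2_diag:
  assumes "psd 2 A" "i < 2"
  shows "Im (A i i) = 0 \<and> Re (A i i) \<ge> 0"
proof -
  have "i = 0 \<or> i = 1" using assms(2) by auto
  then show ?thesis using psd2_facts[OF assms(1)] by auto
qed

lemma real_eq: "Im z = 0 \<Longrightarrow> z = of_real (Re z)"
  by (simp add: complex_eq_iff)

lemma sum_single:
  assumes "finite S" "i \<in> S" "\<And>k. k \<in> S \<Longrightarrow> k \<noteq> i \<Longrightarrow> f k = 0"
  shows "sum f S = f i"
proof -
  have "sum f S = f i + sum f (S - {i})" using assms by (simp add: sum.remove)
  also have "sum f (S - {i}) = 0" using assms by (intro sum.neutral) auto
  finally show ?thesis by simp
qed

lemma diag_local:
  assumes off: "\<forall>i<4. \<forall>j<4. i \<noteq> j \<longrightarrow> \<sigma> i j = 0"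
    and dg: "\<forall>i<4. Im (\<sigma> i i) = 0 \<and> Re (\<sigma> i i) \<ge> 0"
    and tr: "(\<Sum>i<4. \<sigma> i i) = 1"
  shows "\<not> bell_nonlocal \<sigma>"
  unfolding bell_nonlocal_def
proof (intro notI, elim exE conjE)
  fix mA mB oA oB M N
  assume pM: "povms 2 mA oA M" and pN: "povms 2 mB oB N"
    and nl: "\<not> lhv_model mA mB oA oB (bell_prob \<sigma> M N)"
  define q where "q = (\<lambda>l. Re (\<sigma> l l))"
  define pA where "pA = (\<lambda>l x a. Re (M x a (l div 2) (l div 2)))"
  define pB where "pB = (\<lambda>l y b. Re (N y b (l mod 2) (l mod 2)))"
  have l2: "l div 2 < 2" "l mod 2 < 2" if "l < 4" for l :: nat using that by auto
  have Mr: "Im (M x a i i) = 0 \<and> Re (M x a i i) \<ge> 0" if "x < mA" "a < oA" "i < 2" for x a i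
    using pM that unfolding povms_def by (intro psd2_diag) auto
  have Nr: "Im (N y b i i) = 0 \<and> Re (N y b i i) \<ge> 0" if "y < mB" "b < oB" "i < 2" for y b i
    using pN that unfolding povms_def by (intro psd2_diag) auto
  have lhv: "lhv_model mA mB oA oB (bell_prob \<sigma> M N)"
    unfolding lhv_model_def
  proof (rule exI[of _ 4], rule exI[of _ q], rule exI[of _ pA], rule exI[of _ pB], intro conjI allI impI)
    show "\<And>l. l < 4 \<Longrightarrow> 0 \<le> q l" using dg q_def by auto
    show "(\<Sum>l<4. q l) = 1" using arg_cong[OF tr, of Re] unfolding q_def by simp
    show "0 \<le> pA l x a" if "l < 4" "x < mA" "a < oA" for l x a
      using Mr[OF that(2,3) l2(1)[OF that(1)]] pA_def by simp
    show "0 \<le> pB l y b" if "l < 4" "y < mB" "b < oB" for l y b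
      using Nr[OF that(2,3) l2(2)[OF that(1)]] pB_def by simp
    show "(\<Sum>a<oA. pA l x a) = 1" if "l < 4" "x < mA" for l x
    proof -
      have "(\<Sum>a<oA. M x a (l div 2) (l div 2)) = 1"
        using pM that l2 unfolding povms_def idm_def by auto
      then show ?thesis unfolding pA_def by (metis Re_sum one_complex.simps(1))
    qed
    show "(\<Sum>b<oB. pB l y b) = 1" if "l < 4" "y < mB" for l y
    proof -
      have "(\<Sum>b<oB. N y b (l mod 2) (l mod 2)) = 1"
        using pN that l2 unfolding povms_def idm_def by auto
      then show ?thesis unfolding pB_def by (metis Re_sum one_complex.simps(1))
    qed
    show "bell_prob \<sigma> M N a b x y = complex_of_real (\<Sum>l<4. q l * pA l x a * pB l y b)"
      if "a < oA" "b < oB" "x < mA" "y < mB" for a b x y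
    proof -
      have "bell_prob \<sigma> M N a b x y = (\<Sum>i<4. \<Sum>k<4. \<sigma> i k * kron 2 (M x a) (N y b) k i)"
        unfolding bell_prob_def mtrace_def mmult_def by simp
      also have "\<dots> = (\<Sum>i<4. \<sigma> i i * kron 2 (M x a) (N y b) i i)"
        using off by (intro sum.cong refl sum_single) auto
      also have "\<dots> = (\<Sum>i<4. complex_of_real (q i * pA i x a * pB i y b))"
      proof (intro sum.cong refl)
        fix i assume "i \<in> {..<4::nat}"
        then have i: "i < 4" by simp
        have "\<sigma> i i = of_real (q i)" using dg i q_def real_eq by auto
        moreover have "M x a (i div 2) (i div 2) = of_real (pA i x a)"
          using Mr[OF that(3,1) l2(1)[OF i]] pA_def real_eq by auto
        moreover have "N y b (i mod 2) (i mod 2) = of_real (pB i y b)"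
          using Nr[OF that(4,2) l2(2)[OF i]] pB_def real_eq by auto
        ultimately show "\<sigma> i i * kron 2 (M x a) (N y b) i i = complex_of_real (q i * pA i x a * pB i y b)"
          unfolding kron_def by simp
      qed
      also have "\<dots> = complex_of_real (\<Sum>l<4. q l * pA l x a * pB l y b)" by simp
      finally show ?thesis .
    qed
  qed
  with nl show False by simp
qed


lemma psd_diag:
  assumes off: "\<forall>i<d. \<forall>j<d. i \<noteq> j \<longrightarrow> A i j = 0"
    and dg: "\<forall>i<d. Im (A i i) = 0 \<and> Re (A i i) \<ge> 0"
  shows "psd d A"
  unfolding psd_def Let_def
proof (intro allI)
  fix v :: "nat \<Rightarrow> complex"
  have "(\<Sum>i<d. \<Sum>j<d. cnj (v i) * A i j * v j) = (\<Sum>i<d. cnj (v i) * A i i * v i)"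
    using off by (intro sum.cong refl sum_single) auto
  also have "\<dots> = (\<Sum>i<d. of_real (Re (A i i) * cmod (v i) ^ 2))"
  proof (intro sum.cong refl)
    fix i assume "i \<in> {..<d}"
    then have "A i i = of_real (Re (A i i))" using dg real_eq by auto
    then show "cnj (v i) * A i i * v i = of_real (Re (A i i) * cmod (v i) ^ 2)"
      by (metis complex_norm_square mult.commute mult.left_commute of_real_mult of_real_power)
  qed
  finally have e: "(\<Sum>i<d. \<Sum>j<d. cnj (v i) * A i j * v j) = of_real (\<Sum>i<d. Re (A i i) * cmod (v i) ^ 2)"
    by simp
  have "(\<Sum>i<d. Re (A i i) * cmod (v i) ^ 2) \<ge> 0" using dg by (intro sum_nonneg) auto
  then show "Im (\<Sum>i<d. \<Sum>j<d. cnj (v i) * A i j * v j) = 0 \<and> 0 \<le> Re (\<Sum>i<d. \<Sum>j<d. cnj (v i) * A i j * v j)"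
    unfolding e by simp
qed

lemma kraus_entry:
  "mmult d (mmult d K \<rho>) (adjoint K) i i = (\<Sum>l<d. \<Sum>k<d. cnj (cnj (K i l)) * \<rho> l k * cnj (K i k))"
proof -
  have "mmult d (mmult d K \<rho>) (adjoint K) i i = (\<Sum>k<d. \<Sum>l<d. K i l * \<rho> l k * cnj (K i k))"
    unfolding mmult_def adjoint_def by (simp add: sum_distrib_right)
  also have "\<dots> = (\<Sum>l<d. \<Sum>k<d. K i l * \<rho> l k * cnj (K i k))" by (rule sum.swap)
  finally show ?thesis by simp
qed

lemma kraus_diag_pos:
  assumes "psd d \<rho>"
  shows "Im (mmult d (mmult d K \<rho>) (adjoint K) i i) = 0 \<and> Re (mmult d (mmult d K \<rho>) (adjoint K) i i) \<ge> 0"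
  using assms unfolding psd_def kraus_entry Let_def
  by (elim allE[where x="\<lambda>l. cnj (K i l)"]) simp

lemma list_sum_pos:
  assumes "\<And>K. K \<in> set Ks \<Longrightarrow> Im (f K) = 0 \<and> Re (f K) \<ge> 0"
  shows "Im (\<Sum>K\<leftarrow>Ks. f K) = 0 \<and> Re (\<Sum>K\<leftarrow>Ks. f K) \<ge> 0"
  using assms by (induction Ks) auto

lemma list_sum_zero:
  assumes "\<And>K. K \<in> set Ks \<Longrightarrow> f K = (0::complex)"
  shows "(\<Sum>K\<leftarrow>Ks. f K) = 0"
  using assms by (induction Ks) auto

lemma sum_list_swap:
  "(\<Sum>i\<in>S. \<Sum>K\<leftarrow>Ks. g K i) = (\<Sum>K\<leftarrow>Ks. \<Sum>i\<in>S. g K i :: complex)"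
  by (induction Ks) (auto simp: sum.distrib)

lemma kraus_trace:
  assumes "trace_preserving d Ks"
  shows "mtrace d (kraus_apply d Ks \<rho>) = mtrace d \<rho>"
proof -
  have one: "(\<Sum>i<d. mmult d (mmult d K \<rho>) (adjoint K) i i) =
      (\<Sum>l<d. \<Sum>k<d. \<rho> l k * mmult d (adjoint K) K k l)" for K
  proof -
    have "(\<Sum>i<d. mmult d (mmult d K \<rho>) (adjoint K) i i) = (\<Sum>i<d. \<Sum>l<d. \<Sum>k<d. K i l * \<rho> l k * cnj (K i k))"
      unfolding kraus_entry by simp
    also have "\<dots> = (\<Sum>l<d. \<Sum>i<d. \<Sum>k<d. K i l * \<rho> l k * cnj (K i k))" by (rule sum.swap)
    also have "\<dots> = (\<Sum>l<d. \<Sum>k<d. \<Sum>i<d. K i l * \<rho> l k * cnj (K i k))"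
      by (intro sum.cong refl sum.swap)
    also have "\<dots> = (\<Sum>l<d. \<Sum>k<d. \<rho> l k * mmult d (adjoint K) K k l)"
      unfolding mmult_def adjoint_def by (simp add: sum_distrib_left mult_ac)
    finally show ?thesis .
  qed
  have "mtrace d (kraus_apply d Ks \<rho>) = (\<Sum>K\<leftarrow>Ks. \<Sum>i<d. mmult d (mmult d K \<rho>) (adjoint K) i i)"
    unfolding mtrace_def kraus_apply_def by (rule sum_list_swap)
  also have "\<dots> = (\<Sum>K\<leftarrow>Ks. \<Sum>l<d. \<Sum>k<d. \<rho> l k * mmult d (adjoint K) K k l)"
    unfolding one ..
  also have "\<dots> = (\<Sum>l<d. \<Sum>K\<leftarrow>Ks. \<Sum>k<d. \<rho> l k * mmult d (adjoint K) K k l)"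
    by (rule sum_list_swap[symmetric])
  also have "\<dots> = (\<Sum>l<d. \<Sum>k<d. \<Sum>K\<leftarrow>Ks. \<rho> l k * mmult d (adjoint K) K k l)"
    by (intro sum.cong refl sum_list_swap[symmetric])
  also have "\<dots> = (\<Sum>l<d. \<Sum>k<d. \<rho> l k * idm k l)"
  proof (intro sum.cong refl)
    fix l k assume "l \<in> {..<d}" "k \<in> {..<d}"
    then have "(\<Sum>K\<leftarrow>Ks. mmult d (adjoint K) K k l) = idm k l"
      using assms unfolding trace_preserving_def by auto
    then show "(\<Sum>K\<leftarrow>Ks. \<rho> l k * mmult d (adjoint K) K k l) = \<rho> l k * idm k l"
      by (simp add: sum_list_const_mult)
  qed
  also have "\<dots> = (\<Sum>l<d. \<rho> l l)"
    by (intro sum.cong refl) (simp add: idm_def if_distrib cong: if_cong)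
  finally show ?thesis unfolding mtrace_def .
qed


lemma lt4: "(i::nat) < 4 \<Longrightarrow> i = 0 \<or> i = 1 \<or> i = 2 \<or> i = 3" by auto

lemma forward:
  assumes dens: "density 2 \<rho>s" and z: "\<rho>s 0 1 = 0" and io: "incoherent_op 4 Ks"
  shows "\<not> bell_nonlocal (kraus_apply 4 Ks (kron 2 \<rho>s proj0))"
proof -
  have ps: "psd 2 \<rho>s" and tr2: "mtrace 2 \<rho>s = 1" using dens density_def by auto
  note f = psd2_facts[OF ps]
  have z': "\<rho>s 1 0 = 0" using f(5) z by simp
  define \<rho> where "\<rho> = kron 2 \<rho>s proj0"
  have \<rho>e: "\<rho> i j = (if i = 0 \<and> j = 0 then \<rho>s 0 0 else if i = 2 \<and> j = 2 then \<rho>s 1 1 else 0)"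
    if "i < 4" "j < 4" for i j
    using lt4[OF that(1)] lt4[OF that(2)] z z' unfolding \<rho>_def kron_def proj0_def by auto
  have off: "\<forall>i<4. \<forall>j<4. i \<noteq> j \<longrightarrow> \<rho> i j = 0" using \<rho>e by auto
  have dg: "\<forall>i<4. Im (\<rho> i i) = 0 \<and> Re (\<rho> i i) \<ge> 0" using \<rho>e f by auto
  have tr: "mtrace 4 \<rho> = 1"
    using tr2 unfolding mtrace_def sum2 sum4 using \<rho>e by simp
  have inc: "incoherent 4 \<rho>"
    unfolding incoherent_def density_def diagonal_def using psd_diag[OF off dg] tr off by auto
  define \<sigma> where "\<sigma> = kraus_apply 4 Ks \<rho>"
  have psd\<rho>: "psd 4 \<rho>" using psd_diag[OF off dg] .
  have soff: "\<forall>i<4. \<forall>j<4. i \<noteq> j \<longrightarrow> \<sigma> i j = 0"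
  proof (intro allI impI)
    fix i j :: nat assume "i < 4" "j < 4" "i \<noteq> j"
    then show "\<sigma> i j = 0"
      unfolding \<sigma>_def kraus_apply_def
      using io inc unfolding incoherent_op_def diagonal_def
      by (intro list_sum_zero) blast
  qed
  have sdg: "\<forall>i<4. Im (\<sigma> i i) = 0 \<and> Re (\<sigma> i i) \<ge> 0"
    unfolding \<sigma>_def kraus_apply_def
    by (intro allI impI list_sum_pos kraus_diag_pos psd\<rho>)
  have str: "(\<Sum>i<4. \<sigma> i i) = 1"
    using kraus_trace[of 4 Ks \<rho>] io tr unfolding incoherent_op_def \<sigma>_def mtrace_def by simp
  show ?thesis using diag_local[OF soff sdg str] unfolding \<sigma>_def \<rho>_def .
qed


definition perm4 :: "nat \<Rightarrow> nat" where
  "perm4 i = (if i = 2 then 3 else if i = 3 then 2 else i)"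

definition cnot :: cmat where
  "cnot = (\<lambda>i j. if j = perm4 i then 1 else 0)"

lemma cnot_tp: "trace_preserving 4 [cnot]"
  unfolding trace_preserving_def
proof (intro allI impI)
  fix i j :: nat assume "i < 4" "j < 4"
  then show "(\<Sum>K\<leftarrow>[cnot]. mmult 4 (adjoint K) K i j) = idm i j"
    using lt4[of i] lt4[of j]
    unfolding mmult_def adjoint_def cnot_def perm4_def idm_def sum4 by auto
qed

lemma cnot_conj: "i < 4 \<Longrightarrow> j < 4 \<Longrightarrow> mmult 4 (mmult 4 cnot \<rho>) (adjoint cnot) i j = \<rho> (perm4 i) (perm4 j)"
  using lt4[of i] lt4[of j]
  unfolding mmult_def adjoint_def cnot_def perm4_def sum4 by auto

lemma cnot_io: "incoherent_op 4 [cnot]"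
  unfolding incoherent_op_def
proof (intro conjI cnot_tp ballI allI impI)
  fix K \<rho> assume "K \<in> set [cnot]" "incoherent 4 \<rho>"
  then have K: "K = cnot" and d: "diagonal 4 \<rho>" unfolding incoherent_def by auto
  show "diagonal 4 (mmult 4 (mmult 4 K \<rho>) (adjoint K))"
    unfolding diagonal_def K
  proof (intro allI impI)
    fix i j :: nat assume "i < 4" "j < 4" "i \<noteq> j"
    moreover have "perm4 i < 4" "perm4 j < 4" "perm4 i \<noteq> perm4 j"
      using calculation unfolding perm4_def by auto
    ultimately show "mmult 4 (mmult 4 cnot \<rho>) (adjoint cnot) i j = 0"
      using d unfolding diagonal_def by (simp add: cnot_conj)
  qed
qed

definition sig :: "complex \<Rightarrow> complex \<Rightarrow> complex \<Rightarrow> complex \<Rightarrow> cmat" where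
  "sig A C C' D = (\<lambda>i j. if i = 0 \<and> j = 0 then A else if i = 0 \<and> j = 3 then C
     else if i = 3 \<and> j = 0 then C' else if i = 3 \<and> j = 3 then D else 0)"

lemma bp_sig:
  "bell_prob (sig A C C' D) M N a b x y = A * M x a 0 0 * N y b 0 0 + C * M x a 1 0 * N y b 1 0
     + C' * M x a 0 1 * N y b 0 1 + D * M x a 1 1 * N y b 1 1"
  unfolding bell_prob_def mtrace_def mmult_def sum4 sig_def kron_def by simp

lemma sigma_eq:
  "bell_prob (kraus_apply 4 [cnot] (kron 2 \<rho>s proj0)) M N a b x y
   = bell_prob (sig (\<rho>s 0 0) (\<rho>s 0 1) (\<rho>s 1 0) (\<rho>s 1 1)) M N a b x y"
proof -
  have "kraus_apply 4 [cnot] (kron 2 \<rho>s proj0) i k = sig (\<rho>s 0 0) (\<rho>s 0 1) (\<rho>s 1 0) (\<rho>s 1 1) i k"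
    if "i < 4" "k < 4" for i k
    using that lt4[of i] lt4[of k] unfolding kraus_apply_def
    by (auto simp: cnot_conj sig_def kron_def proj0_def perm4_def)
  then show ?thesis unfolding bell_prob_def mtrace_def mmult_def
    by (intro sum.cong refl) auto
qed


definition el :: "real \<Rightarrow> complex \<Rightarrow> cmat" where
  "el \<alpha> \<beta> = (\<lambda>i j. if i = 0 \<and> j = 0 then of_real ((1 + \<alpha>) / 2)
     else if i = 1 \<and> j = 1 then of_real ((1 - \<alpha>) / 2)
     else if i = 0 \<and> j = 1 then cnj \<beta> / 2 else if i = 1 \<and> j = 0 then \<beta> / 2 else 0)"

definition sg :: "nat \<Rightarrow> real" where "sg a = (if a = 0 then 1 else -1)"

definition meas :: "(nat \<Rightarrow> real) \<Rightarrow> (nat \<Rightarrow> complex) \<Rightarrow> nat \<Rightarrow> nat \<Rightarrow> cmat" where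
  "meas \<alpha> \<beta> = (\<lambda>x a. el (sg a * \<alpha> x) (of_real (sg a) * \<beta> x))"

lemma el_psd:
  assumes "\<alpha>^2 + cmod \<beta> ^ 2 \<le> 1"
  shows "psd 2 (el \<alpha> \<beta>)"
proof (rule psd2_intro[where p="(1 + \<alpha>) / 2" and r="(1 - \<alpha>) / 2"])
  have "\<alpha>^2 \<le> 1" using assms by (smt (verit) zero_le_power2)
  then have "\<bar>\<alpha>\<bar> \<le> 1" by (simp add: abs_square_le_1)
  then show "0 \<le> (1 + \<alpha>) / 2" "0 \<le> (1 - \<alpha>) / 2" by auto
  have "cmod (cnj \<beta> / 2) ^ 2 = cmod \<beta> ^ 2 / 4" by (simp add: norm_divide power_divide)
  also have "\<dots> \<le> (1 + \<alpha>) / 2 * ((1 - \<alpha>) / 2)" using assms by (simp add: field_simps power2_eq_square)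
  finally show "cmod (el \<alpha> \<beta> 0 1) ^ 2 \<le> (1 + \<alpha>) / 2 * ((1 - \<alpha>) / 2)" by (simp add: el_def)
qed (auto simp: el_def)

lemma meas_povms:
  assumes "\<And>x. x < m \<Longrightarrow> \<alpha> x ^ 2 + cmod (\<beta> x) ^ 2 \<le> 1"
  shows "povms 2 m 2 (meas \<alpha> \<beta>)"
  unfolding povms_def
proof (intro allI impI conjI)
  fix x a assume x: "x < m" and "a < (2::nat)"
  have "(sg a * \<alpha> x)^2 + cmod (of_real (sg a) * \<beta> x) ^ 2 = \<alpha> x ^ 2 + cmod (\<beta> x) ^ 2"
    by (simp add: sg_def norm_mult power_mult_distrib)
  then show "psd 2 (meas \<alpha> \<beta> x a)" unfolding meas_def using assms[OF x]
    by (intro el_psd) simp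
next
  fix x i j :: nat assume "x < m" "i < 2" "j < 2"
  then show "(\<Sum>a<2. meas \<alpha> \<beta> x a i j) = idm i j"
    unfolding sum2 meas_def el_def sg_def idm_def
    by (auto simp: field_simps)
qed

lemma E_formula:
  "(\<Sum>a<2. \<Sum>b<2. of_real (sg a * sg b) * bell_prob (sig A C C' D) (meas \<alpha> \<beta>) (meas \<alpha>' \<beta>') a b x y)
   = of_real (\<alpha> x * \<alpha>' y) * (A + D) + C * \<beta> x * \<beta>' y + C' * cnj (\<beta> x) * cnj (\<beta>' y)"
  unfolding sum2 bp_sig meas_def el_def sg_def
  by (simp add: field_simps)


lemma mul_le_abs: "\<bar>x::real\<bar> \<le> 1 \<Longrightarrow> x * t \<le> \<bar>t\<bar>"
proof -
  assume "\<bar>x\<bar> \<le> 1"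
  have "x * t \<le> \<bar>x * t\<bar>" by simp
  also have "\<dots> = \<bar>x\<bar> * \<bar>t\<bar>" by (simp add: abs_mult)
  also have "\<dots> \<le> 1 * \<bar>t\<bar>" using \<open>\<bar>x\<bar> \<le> 1\<close> by (intro mult_right_mono) auto
  finally show ?thesis by simp
qed

lemma chsh_det:
  assumes "\<bar>x0\<bar> \<le> 1" "\<bar>x1\<bar> \<le> 1" "\<bar>y0\<bar> \<le> 1" "\<bar>y1::real\<bar> \<le> 1"
  shows "x0 * (y0 + y1) + x1 * (y0 - y1) \<le> 2"
proof -
  have "x0 * (y0 + y1) \<le> \<bar>y0 + y1\<bar>" using assms(1) by (rule mul_le_abs)
  moreover have "x1 * (y0 - y1) \<le> \<bar>y0 - y1\<bar>" using assms(2) by (rule mul_le_abs)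
  moreover have "\<bar>y0 + y1\<bar> + \<bar>y0 - y1\<bar> \<le> 2" using assms(3,4) by arith
  ultimately show ?thesis by linarith
qed

definition Ecorr :: "(nat \<Rightarrow> nat \<Rightarrow> nat \<Rightarrow> nat \<Rightarrow> complex) \<Rightarrow> nat \<Rightarrow> nat \<Rightarrow> complex" where
  "Ecorr P x y = (\<Sum>a<2. \<Sum>b<2. of_real (sg a * sg b) * P a b x y)"

lemma chsh_lhv:
  assumes "lhv_model 2 2 2 2 P"
  shows "Re (Ecorr P 0 0 + Ecorr P 0 1 + Ecorr P 1 0 - Ecorr P 1 1) \<le> 2"
proof -
  obtain n :: nat and q :: "nat \<Rightarrow> real" and pA pB :: "nat \<Rightarrow> nat \<Rightarrow> nat \<Rightarrow> real" where q0: "\<forall>l<n. q l \<ge> (0::real)" and q1: "(\<Sum>l<n. q l) = 1"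
    and pA: "\<forall>l<n. \<forall>x<2. (\<forall>a<2. pA l x a \<ge> (0::real)) \<and> (\<Sum>a<2. pA l x a) = 1"
    and pB: "\<forall>l<n. \<forall>y<2. (\<forall>b<2. pB l y b \<ge> (0::real)) \<and> (\<Sum>b<2. pB l y b) = 1"
    and P: "\<forall>a<2. \<forall>b<2. \<forall>x<2. \<forall>y<2. P a b x y = complex_of_real (\<Sum>l<n. q l * pA l x a * pB l y b)"
    using assms unfolding lhv_model_def by (elim exE conjE) blast
  define X where "X l x = pA l x 0 - pA l x 1" for l x
  define Y where "Y l y = pB l y 0 - pB l y 1" for l y
  have E: "Re (Ecorr P x y) = (\<Sum>l<n. q l * (X l x * Y l y))" if "x < 2" "y < 2" for x y
  proof -
    have "Re (Ecorr P x y) = (\<Sum>l<n. q l * pA l x 0 * pB l y 0) - (\<Sum>l<n. q l * pA l x 0 * pB l y 1)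
       - (\<Sum>l<n. q l * pA l x 1 * pB l y 0) + (\<Sum>l<n. q l * pA l x 1 * pB l y 1)"
      unfolding Ecorr_def sum2 sg_def using P that by simp
    also have "\<dots> = (\<Sum>l<n. q l * pA l x 0 * pB l y 0 - q l * pA l x 0 * pB l y 1
       - q l * pA l x 1 * pB l y 0 + q l * pA l x 1 * pB l y 1)"
      by (simp add: sum.distrib sum_subtractf)
    also have "\<dots> = (\<Sum>l<n. q l * (X l x * Y l y))"
      unfolding X_def Y_def by (intro sum.cong refl) (simp add: algebra_simps)
    finally show ?thesis .
  qed
  have b: "\<bar>X l x\<bar> \<le> 1" if "l < n" "x < 2" for l x
  proof -
    have "pA l x 0 \<ge> 0" "pA l x 1 \<ge> 0" "pA l x 0 + pA l x 1 = 1" using pA that by (auto simp: sum2)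
    then show ?thesis unfolding X_def by arith
  qed
  have bY: "\<bar>Y l y\<bar> \<le> 1" if "l < n" "y < 2" for l y
  proof -
    have "pB l y 0 \<ge> 0" "pB l y 1 \<ge> 0" "pB l y 0 + pB l y 1 = 1" using pB that by (auto simp: sum2)
    then show ?thesis unfolding Y_def by arith
  qed
  have "Re (Ecorr P 0 0 + Ecorr P 0 1 + Ecorr P 1 0 - Ecorr P 1 1)
     = (\<Sum>l<n. q l * (X l 0 * (Y l 0 + Y l 1) + X l 1 * (Y l 0 - Y l 1)))"
    using E[of 0 0] E[of 0 1] E[of 1 0] E[of 1 1]
    by (simp add: sum.distrib[symmetric] sum_subtractf[symmetric] algebra_simps)
  also have "\<dots> \<le> (\<Sum>l<n. q l * 2)"
    using q0 b bY chsh_det by (intro sum_mono mult_left_mono) auto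
  also have "\<dots> = 2" using q1 by (simp add: sum_distrib_right[symmetric])
  finally show ?thesis .
qed


lemma backward:
  assumes dens: "density 2 \<rho>s" and nz: "\<rho>s 0 1 \<noteq> 0"
  shows "bell_nonlocal (kraus_apply 4 [cnot] (kron 2 \<rho>s proj0))"
proof -
  have ps: "psd 2 \<rho>s" and tr2: "mtrace 2 \<rho>s = 1" using dens density_def by auto
  note f = psd2_facts[OF ps]
  define c where "c = \<rho>s 0 1"
  define k where "k = cmod c ^ 2"
  have c10: "\<rho>s 1 0 = cnj c" using f(5) c_def by simp
  have AD: "\<rho>s 0 0 + \<rho>s 1 1 = 1" using tr2 unfolding mtrace_def sum2 by simp
  then have ReAD: "Re (\<rho>s 0 0) + Re (\<rho>s 1 1) = 1" by (metis one_complex.simps(1) plus_complex.simps(1))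
  have k0: "k > 0" using nz c_def k_def by simp
  have "k \<le> Re (\<rho>s 0 0) * Re (\<rho>s 1 1)" using psd2_bound[OF ps] c_def k_def by simp
  also have "\<dots> \<le> ((Re (\<rho>s 0 0) + Re (\<rho>s 1 1)) / 2) ^ 2" by (rule amgm)
  finally have k4: "k \<le> 1 / 4" using ReAD by (simp add: power2_eq_square)
  have cc: "c * cnj c = of_real k" unfolding k_def by (metis complex_norm_square of_real_power)
  have cc': "cnj c * c = of_real k" using cc by (simp add: mult.commute)
  define \<alpha>A where "\<alpha>A = (\<lambda>x::nat. if x = 0 then 1 else (0::real))"
  define \<beta>A where "\<beta>A = (\<lambda>x::nat. if x = 0 then 0 else 2 * cnj c)"
  define \<alpha>B where "\<alpha>B = (\<lambda>y::nat. 1 - k^2)"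
  define \<beta>B where "\<beta>B = (\<lambda>y::nat. if y = 0 then complex_of_real k else - complex_of_real k)"
  define M where "M = meas \<alpha>A \<beta>A"
  define N where "N = meas \<alpha>B \<beta>B"
  have pM: "povms 2 2 2 M" unfolding M_def
  proof (rule meas_povms)
    fix x :: nat assume "x < 2"
    have "cmod (2 * cnj c) ^ 2 = 4 * k" unfolding k_def by (simp add: norm_mult power_mult_distrib)
    then show "\<alpha>A x ^ 2 + cmod (\<beta>A x) ^ 2 \<le> 1" unfolding \<alpha>A_def \<beta>A_def using k4 by auto
  qed
  have pN: "povms 2 2 2 N" unfolding N_def
  proof (rule meas_povms)
    fix y :: nat assume "y < 2"
    have "k ^ 2 \<le> 1" using k0 k4 by (simp add: power_le_one)
    have "k ^ 2 * k ^ 2 \<le> k ^ 2" using \<open>k^2 \<le> 1\<close> by (intro mult_left_le) auto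
    then have "(1 - k^2)^2 + k^2 \<le> 1" by (simp add: power2_eq_square algebra_simps)
    then show "\<alpha>B y ^ 2 + cmod (\<beta>B y) ^ 2 \<le> 1" unfolding \<alpha>B_def \<beta>B_def using k0 by auto
  qed
  define P where "P = bell_prob (kraus_apply 4 [cnot] (kron 2 \<rho>s proj0)) M N"
  have P': "P = bell_prob (sig (\<rho>s 0 0) c (cnj c) (\<rho>s 1 1)) M N"
    unfolding P_def using sigma_eq c_def c10 by (intro ext) metis
  have E: "Ecorr P x y = of_real (\<alpha>A x * \<alpha>B y) * (\<rho>s 0 0 + \<rho>s 1 1) + c * \<beta>A x * \<beta>B y + cnj c * cnj (\<beta>A x) * cnj (\<beta>B y)" for x y
    unfolding P' Ecorr_def M_def N_def by (rule E_formula)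
  have "Ecorr P 0 0 + Ecorr P 0 1 + Ecorr P 1 0 - Ecorr P 1 1 = of_real (2 + 6 * k^2)"
    unfolding E AD \<alpha>A_def \<beta>A_def \<alpha>B_def \<beta>B_def
    by (simp add: algebra_simps cc cc' power2_eq_square)
  then have "Re (Ecorr P 0 0 + Ecorr P 0 1 + Ecorr P 1 0 - Ecorr P 1 1) > 2" using k0 by simp
  then have "\<not> lhv_model 2 2 2 2 P" using chsh_lhv by fastforce
  then show ?thesis unfolding bell_nonlocal_def P_def using pM pN by blast
qed

theorem theorem1:
  fixes \<rho>s :: cmat
  assumes "density 2 \<rho>s"
  shows "(\<exists>Ks. incoherent_op 4 Ks \<and> bell_nonlocal (kraus_apply 4 Ks (kron 2 \<rho>s proj0)))
           \<longleftrightarrow> \<rho>s 0 1 \<noteq> 0"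
  using forward[OF assms] backward[OF assms] cnot_io by blast

end
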